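(* Fix an integer $q\ge 2$. For integers $n\ge 3$ let $S_1=\sqrt{q^2+4(q-1)(n-2)}$, $S_2=\sqrt{q^2+4(q-1)(n-3)}$, and let $c\in\left[0,(q-1)\left(1-\frac{2}{S_1+S_2}\right)\right)$ be such that $$s=\frac{S_1-n(q-2)+2c+q-4}{nq}\in T_n.$$ Then, as $n\to\infty$, $$A_q(n,s)\lesssim\frac{q(q-1)^2n^2}{2(q-c)},$$ i.e. $A_q(n,s)\le(1+o(1))\frac{q(q-1)^2n^2}{2(q-c)}$.
   Context: $T_n=\{-1+\frac{2i}{n}: i=0,1,\dots,n\}$. $A_q(n,s)$ is the maximum cardinality of a code $C$ in the $q$-ary Hamming space $\{0,\dots,q-1\}^n$ with $1-\frac{2d(x,y)}{n}\le s$ for all distinct $x,y\in C$, where $d$ is the Hamming distance. *)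

theory Defs
  imports Complex_Main
begin

definition hamming_space :: "nat \<Rightarrow> nat \<Rightarrow> nat list set" where
  "hamming_space q n = {x. length x = n \<and> (\<forall>i<n. x ! i < q)}"

definition hamming_dist :: "nat list \<Rightarrow> nat list \<Rightarrow> nat" where
  "hamming_dist x y = card {i. i < length x \<and> x ! i \<noteq> y ! i}"

definition T_set :: "nat \<Rightarrow> real set" where
  "T_set n = {-1 + 2 * real i / real n | i. i \<le> n}"

definition A_code :: "nat \<Rightarrow> nat \<Rightarrow> real \<Rightarrow> nat" where
  "A_code q n s = Max {card C | C. C \<subseteq> hamming_space q n \<and>
      (\<forall>x\<in>C. \<forall>y\<in>C. x \<noteq> y \<longrightarrow> 1 - 2 * real (hamming_dist x y) / real n \<le> s)}"

end

theory Submission imports Defs begin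
definition ep1 :: "real \<Rightarrow> real \<Rightarrow> real \<Rightarrow> real" where
  "ep1 r j t = (t)"

definition ep2 :: "real \<Rightarrow> real \<Rightarrow> real \<Rightarrow> real" where
  "ep2 r j t = (t^2 + 2*t*r - t + j*r^2 - j*r)"

definition ep3 :: "real \<Rightarrow> real \<Rightarrow> real \<Rightarrow> real" where
  "ep3 r j t = (t^3 + 6*t^2*r - 3*t^2 + 3*t*j*r^2 - 3*t*j*r + 6*t*r^2 - 6*t*r + 2*t + 4*j*r^3 - 6*j*r^2 + 2*j*r)"

definition ep4 :: "real \<Rightarrow> real \<Rightarrow> real \<Rightarrow> real" where
  "ep4 r j t = (t^4 + 12*t^3*r - 6*t^3 + 6*t^2*j*r^2 - 6*t^2*j*r + 36*t^2*r^2 - 36*t^2*r + 11*t^2 + 28*t*j*r^3 - 42*t*j*r^2 + 14*t*j*r + 24*t*r^3 - 36*t*r^2 + 24*t*r - 6*t + 3*j^2*r^4 - 6*j^2*r^3 + 3*j^2*r^2 + 18*j*r^4 - 36*j*r^3 + 24*j*r^2 - 6*j*r)"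

definition ff0 :: "real \<Rightarrow> real \<Rightarrow> real \<Rightarrow> real" where
  "ff0 n r D = (5*n^2*r^4 - n^2*r^3*D - 9*n^2*r^3 + n^2*r^2*D + 4*n^2*r^2 - 6*n*r^4 + 2*n*r^3*D + 12*n*r^3 + n*r^2*D^2 - 3*n*r^2*D - 7*n*r^2 - n*r*D^3 - n*r*D^2 + n*r*D + n*r)"

definition ff1 :: "real \<Rightarrow> real \<Rightarrow> real \<Rightarrow> real" where
  "ff1 n r D = (- 3*n^2*r^3 + 3*n^2*r^2 + 26*n*r^3 - 5*n*r^2*D - 36*n*r^2 - n*r*D^2 + 4*n*r*D + 11*n*r - 24*r^3 + 6*r^2*D + 36*r^2 + 2*r*D^2 - 6*r*D - 14*r - D^3 - D^2 + D + 1)"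

definition ff2 :: "real \<Rightarrow> real \<Rightarrow> real \<Rightarrow> real" where
  "ff2 n r D = (- 12*n*r^2 + n*r*D + 9*n*r + 36*r^2 - 6*r*D - 36*r - D^2 + 3*D + 7)"

definition ff3 :: "real \<Rightarrow> real \<Rightarrow> real \<Rightarrow> real" where
  "ff3 n r D = (n*r - 12*r + D + 6)"

definition a04 :: "real \<Rightarrow> real \<Rightarrow> real" where
  "a04 Q c = (- 2*c*Q^5 + 2*c*Q^4 + 2*Q^6 - 2*Q^5)"

definition a03 :: "real \<Rightarrow> real \<Rightarrow> real" where
  "a03 Q c = (5*c^2*Q^4 - 5*c^2*Q^3 - 9*c*Q^5 + 7*c*Q^4 + 2*c*Q^3 - 5*Q^6 + 31*Q^5 - 42*Q^4 + 16*Q^3)"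

definition a02 :: "real \<Rightarrow> real \<Rightarrow> real" where
  "a02 Q c = (- 4*c^3*Q^3 + 4*c^3*Q^2 + 17*c^2*Q^4 - 22*c^2*Q^3 + 5*c^2*Q^2 + 19*c*Q^5 - 118*c*Q^4 + 171*c*Q^3 - 72*c*Q^2 + 4*Q^6 - 41*Q^5 + 149*Q^4 - 192*Q^3 + 80*Q^2)"

definition a01 :: "real \<Rightarrow> real \<Rightarrow> real" where
  "a01 Q c = (c^4*Q^2 - c^4*Q - 14*c^3*Q^3 + 26*c^3*Q^2 - 12*c^3*Q - 22*c^2*Q^4 + 137*c^2*Q^3 - 213*c^2*Q^2 + 98*c^2*Q - 9*c*Q^5 + 90*c*Q^4 - 327*c*Q^3 + 434*c*Q^2 - 188*c*Q - Q^6 + 12*Q^5 - 65*Q^4 + 186*Q^3 - 228*Q^2 + 96*Q)"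

definition a00 :: "real \<Rightarrow> real \<Rightarrow> real" where
  "a00 Q c = (4*c^4*Q^2 - 9*c^4*Q + 5*c^4 + 8*c^3*Q^3 - 50*c^3*Q^2 + 82*c^3*Q - 40*c^3 + 5*c^2*Q^4 - 49*c^2*Q^3 + 176*c^2*Q^2 - 238*c^2*Q + 106*c^2 + c*Q^5 - 12*c*Q^4 + 67*c*Q^3 - 194*c*Q^2 + 242*c*Q - 104*c + 2*Q^4 - 16*Q^3 + 54*Q^2 - 72*Q + 32)"

definition a14 :: "real \<Rightarrow> real \<Rightarrow> real" where
  "a14 Q c = (2*Q^6 - 2*Q^5)"

definition a13 :: "real \<Rightarrow> real \<Rightarrow> real" where
  "a13 Q c = (- 10*c*Q^5 + 10*c*Q^4 - 2*Q^6 + 18*Q^5 - 16*Q^4)"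

definition a12 :: "real \<Rightarrow> real \<Rightarrow> real" where
  "a12 Q c = (17*c^2*Q^4 - 17*c^2*Q^3 + 9*c*Q^5 - 67*c*Q^4 + 58*c*Q^3 + 9*Q^6 - 45*Q^5 + 98*Q^4 - 62*Q^3)"

definition a11 :: "real \<Rightarrow> real \<Rightarrow> real" where
  "a11 Q c = (- 12*c^3*Q^3 + 12*c^3*Q^2 - 14*c^2*Q^4 + 81*c^2*Q^3 - 67*c^2*Q^2 - 24*c*Q^5 + 123*c*Q^4 - 251*c*Q^3 + 152*c*Q^2 - 10*Q^6 + 83*Q^5 - 235*Q^4 + 298*Q^3 - 136*Q^2)"

definition a10 :: "real \<Rightarrow> real \<Rightarrow> real" where
  "a10 Q c = (3*c^4*Q^2 - 3*c^4*Q + 6*c^3*Q^3 - 30*c^3*Q^2 + 24*c^3*Q + 14*c^2*Q^4 - 74*c^2*Q^3 + 146*c^2*Q^2 - 86*c^2*Q + 11*c*Q^5 - 91*c*Q^4 + 262*c*Q^3 - 334*c*Q^2 + 152*c*Q + Q^6 - 16*Q^5 + 87*Q^4 - 204*Q^3 + 220*Q^2 - 88*Q)"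

definition a23 :: "real \<Rightarrow> real \<Rightarrow> real" where
  "a23 Q c = (2*Q^6 - 2*Q^5)"

definition a22 :: "real \<Rightarrow> real \<Rightarrow> real" where
  "a22 Q c = (- 4*c*Q^5 + 4*c*Q^4 + 14*Q^6 - 28*Q^5 + 14*Q^4)"

definition a21 :: "real \<Rightarrow> real \<Rightarrow> real" where
  "a21 Q c = (2*c^2*Q^4 - 2*c^2*Q^3 - 34*c*Q^5 + 74*c*Q^4 - 40*c*Q^3 - 12*Q^6 + 90*Q^5 - 158*Q^4 + 80*Q^3)"

definition a20 :: "real \<Rightarrow> real \<Rightarrow> real" where
  "a20 Q c = (18*c^2*Q^4 - 42*c^2*Q^3 + 24*c^2*Q^2 + 18*c*Q^5 - 114*c*Q^4 + 192*c*Q^3 - 96*c*Q^2 + 14*Q^6 - 100*Q^5 + 266*Q^4 - 300*Q^3 + 120*Q^2)"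

definition a32 :: "real \<Rightarrow> real \<Rightarrow> real" where
  "a32 Q c = (6*Q^6 - 6*Q^5)"

definition a31 :: "real \<Rightarrow> real \<Rightarrow> real" where
  "a31 Q c = (- 12*c*Q^5 + 12*c*Q^4 + 18*Q^5 - 18*Q^4)"

definition a30 :: "real \<Rightarrow> real \<Rightarrow> real" where
  "a30 Q c = (6*c^2*Q^4 - 6*c^2*Q^3 + 6*c*Q^5 - 30*c*Q^4 + 24*c*Q^3 + 36*Q^6 - 144*Q^5 + 192*Q^4 - 84*Q^3)"
lemma pow5: "(x::real)^5 = x*x*x*x*x" by (simp add: eval_nat_numeral)
lemma pow6: "(x::real)^6 = x*x*x*x*x*x" by (simp add: eval_nat_numeral)

lemma rec2A:
  fixes r j t :: real
  shows "ep2 r (j+1) (t+(1-r)) = ep2 r j t + 2 * (1-r) * ep1 r j t"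
  unfolding ep1_def ep2_def ep3_def ep4_def
  by (simp add: algebra_simps power2_eq_square power3_eq_cube power4_eq_xxxx)

lemma rec2B:
  fixes r j t :: real
  shows "ep2 r (j+1) (t+(-r)) = ep2 r j t + 2 * (-r) * ep1 r j t"
  unfolding ep1_def ep2_def ep3_def ep4_def
  by (simp add: algebra_simps power2_eq_square power3_eq_cube power4_eq_xxxx)

lemma rec3A:
  fixes r j t :: real
  shows "ep3 r (j+1) (t+(1-r)) = ep3 r j t + 3 * (1-r) * ep2 r j t"
  unfolding ep1_def ep2_def ep3_def ep4_def
  by (simp add: algebra_simps power2_eq_square power3_eq_cube power4_eq_xxxx)

lemma rec3B:
  fixes r j t :: real
  shows "ep3 r (j+1) (t+(-r)) = ep3 r j t + 3 * (-r) * ep2 r j t"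
  unfolding ep1_def ep2_def ep3_def ep4_def
  by (simp add: algebra_simps power2_eq_square power3_eq_cube power4_eq_xxxx)

lemma rec4A:
  fixes r j t :: real
  shows "ep4 r (j+1) (t+(1-r)) = ep4 r j t + 4 * (1-r) * ep3 r j t"
  unfolding ep1_def ep2_def ep3_def ep4_def
  by (simp add: algebra_simps power2_eq_square power3_eq_cube power4_eq_xxxx)

lemma rec4B:
  fixes r j t :: real
  shows "ep4 r (j+1) (t+(-r)) = ep4 r j t + 4 * (-r) * ep3 r j t"
  unfolding ep1_def ep2_def ep3_def ep4_def
  by (simp add: algebra_simps power2_eq_square power3_eq_cube power4_eq_xxxx)
definition ak :: "nat \<Rightarrow> nat \<Rightarrow> nat list \<Rightarrow> nat list \<Rightarrow> real" where
  "ak q i x y = (if x!i = y!i then 1 else 0) - 1 / real q"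

fun EE :: "nat \<Rightarrow> nat \<Rightarrow> nat \<Rightarrow> nat list \<Rightarrow> nat list \<Rightarrow> real" where
  "EE q 0 j x y = 1"
| "EE q (Suc k) 0 x y = 0"
| "EE q (Suc k) (Suc j) x y = EE q (Suc k) j x y + ak q j x y * EE q k j x y"

definition mc :: "nat \<Rightarrow> nat list \<Rightarrow> nat list \<Rightarrow> nat" where
  "mc j x y = card {i. i < j \<and> x!i = y!i}"

definition tt :: "nat \<Rightarrow> nat \<Rightarrow> nat list \<Rightarrow> nat list \<Rightarrow> real" where
  "tt q j x y = real (mc j x y) - real j / real q"

lemma mc_Suc: "mc (Suc j) x y = mc j x y + (if x!j = y!j then 1 else 0)"
proof -
  have "{i. i < Suc j \<and> x!i = y!i} = {i. i < j \<and> x!i = y!i} \<union> (if x!j = y!j then {j} else {})"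
    by (auto simp: less_Suc_eq)
  then show ?thesis unfolding mc_def by (auto simp: card_insert_if)
qed

lemma mc_0: "mc 0 x y = 0" unfolding mc_def by simp

lemma tt_Suc: "tt q (Suc j) x y = tt q j x y + ak q j x y"
  unfolding tt_def ak_def mc_Suc by (simp add: add_divide_distrib)

lemma EE_closed:
  "EE q 1 j x y = ep1 (1/real q) (real j) (tt q j x y) \<and>
   2 * EE q 2 j x y = ep2 (1/real q) (real j) (tt q j x y) \<and>
   6 * EE q 3 j x y = ep3 (1/real q) (real j) (tt q j x y) \<and>
   24 * EE q 4 j x y = ep4 (1/real q) (real j) (tt q j x y)"
proof (induction j)
  case 0
  then show ?case by (simp add: tt_def mc_0 ep1_def ep2_def ep3_def ep4_def numeral_eq_Suc)
next
  case (Suc j)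
  define r where "r = 1 / real q"
  define t where "t = tt q j x y"
  have a: "ak q j x y = 1 - r \<or> ak q j x y = - r" unfolding ak_def r_def by auto
  have ts: "tt q (Suc j) x y = t + ak q j x y" unfolding t_def by (rule tt_Suc)
  have js: "real (Suc j) = real j + 1" by simp
  have E1: "EE q 1 (Suc j) x y = EE q 1 j x y + ak q j x y" by (simp add: numeral_eq_Suc)
  have E2: "EE q 2 (Suc j) x y = EE q 2 j x y + ak q j x y * EE q 1 j x y" by (simp add: numeral_eq_Suc)
  have E3: "EE q 3 (Suc j) x y = EE q 3 j x y + ak q j x y * EE q 2 j x y" by (simp add: numeral_eq_Suc)
  have E4: "EE q 4 (Suc j) x y = EE q 4 j x y + ak q j x y * EE q 3 j x y" by (simp add: numeral_eq_Suc)
  have IH: "EE q 1 j x y = ep1 r (real j) t" "2 * EE q 2 j x y = ep2 r (real j) t"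
     "6 * EE q 3 j x y = ep3 r (real j) t" "24 * EE q 4 j x y = ep4 r (real j) t"
    using Suc.IH unfolding r_def t_def by auto
  define a where "a = ak q j x y"
  have R: "ep2 r (real j+1) (t+a) = ep2 r (real j) t + 2*a*ep1 r (real j) t \<and>
           ep3 r (real j+1) (t+a) = ep3 r (real j) t + 3*a*ep2 r (real j) t \<and>
           ep4 r (real j+1) (t+a) = ep4 r (real j) t + 4*a*ep3 r (real j) t"
  proof (cases "a = 1 - r")
    case True
    then show ?thesis using rec2A[of r "real j" t] rec3A[of r "real j" t] rec4A[of r "real j" t] by simp
  next
    case False
    then have "a = - r" using a unfolding a_def by auto
    then show ?thesis using rec2B[of r "real j" t] rec3B[of r "real j" t] rec4B[of r "real j" t] by simp
  qed
  have ts': "tt q (Suc j) x y = t + a" using ts unfolding a_def .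
  have c1: "EE q 1 (Suc j) x y = ep1 r (real (Suc j)) (tt q (Suc j) x y)"
    unfolding ts' using E1 IH(1) unfolding a_def ep1_def by simp
  have c2: "2 * EE q 2 (Suc j) x y = ep2 r (real (Suc j)) (tt q (Suc j) x y)"
  proof -
    have "2 * EE q 2 (Suc j) x y = 2 * EE q 2 j x y + 2 * a * EE q 1 j x y"
      using E2 unfolding a_def by (simp add: algebra_simps)
    also have "\<dots> = ep2 r (real j) t + 2*a*ep1 r (real j) t" using IH by simp
    also have "\<dots> = ep2 r (real (Suc j)) (tt q (Suc j) x y)" using R unfolding ts' js by simp
    finally show ?thesis .
  qed
  have c3: "6 * EE q 3 (Suc j) x y = ep3 r (real (Suc j)) (tt q (Suc j) x y)"
  proof -
    have "6 * EE q 3 (Suc j) x y = 6 * EE q 3 j x y + 3 * a * (2 * EE q 2 j x y)"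
      using E3 unfolding a_def by (simp add: algebra_simps)
    also have "\<dots> = ep3 r (real j) t + 3*a*ep2 r (real j) t" using IH by simp
    also have "\<dots> = ep3 r (real (Suc j)) (tt q (Suc j) x y)" using R unfolding ts' js by simp
    finally show ?thesis .
  qed
  have c4: "24 * EE q 4 (Suc j) x y = ep4 r (real (Suc j)) (tt q (Suc j) x y)"
  proof -
    have "24 * EE q 4 (Suc j) x y = 24 * EE q 4 j x y + 4 * a * (6 * EE q 3 j x y)"
      using E4 unfolding a_def by (simp add: algebra_simps)
    also have "\<dots> = ep4 r (real j) t + 4*a*ep3 r (real j) t" using IH by simp
    also have "\<dots> = ep4 r (real (Suc j)) (tt q (Suc j) x y)" using R unfolding ts' js by simp
    finally show ?thesis .
  qed
  show ?case using c1 c2 c3 c4 unfolding r_def by simp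
qed

definition psd_on :: "nat list set \<Rightarrow> (nat list \<Rightarrow> nat list \<Rightarrow> real) \<Rightarrow> bool" where
  "psd_on H K \<longleftrightarrow> (\<forall>C w. finite C \<longrightarrow> C \<subseteq> H \<longrightarrow> 0 \<le> (\<Sum>x\<in>C. \<Sum>y\<in>C. w x * w y * K x y))"

lemma psd_one: "psd_on H (\<lambda>x y. 1)"
  unfolding psd_on_def
proof (intro allI impI)
  fix C :: "nat list set" and w :: "nat list \<Rightarrow> real"
  have "(\<Sum>x\<in>C. \<Sum>y\<in>C. w x * w y * 1) = (\<Sum>x\<in>C. w x) * (\<Sum>y\<in>C. w y)"
    by (simp add: sum_product)
  then show "0 \<le> (\<Sum>x\<in>C. \<Sum>y\<in>C. w x * w y * 1)" by simp
qed

lemma psd_zero: "psd_on H (\<lambda>x y. 0)"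
  unfolding psd_on_def by simp

lemma psd_add: "psd_on H K \<Longrightarrow> psd_on H L \<Longrightarrow> psd_on H (\<lambda>x y. K x y + L x y)"
  unfolding psd_on_def
  by (simp add: distrib_left sum.distrib add_nonneg_nonneg)

lemma ak_sum:
  fixes a b q :: nat
  assumes "a < q" "b < q"
  shows "(if a = b then 1 else 0) - 1 / real q =
    (\<Sum>z<q. ((if a = z then 1 else 0) - 1 / real q) * ((if b = z then 1 else 0) - 1 / real q))"
proof -
  have q: "real q > 0" using assms by simp
  define r where "r = 1 / real q"
  define A where "A z = (if a = z then 1 else (0::real))" for z
  define B where "B z = (if b = z then 1 else (0::real))" for z
  have e: "(A z - r) * (B z - r) = A z * B z - (r * A z + r * B z) + r^2" for z
    by (simp add: algebra_simps power2_eq_square)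
  have ab: "A z * B z = (if a = z then B z else 0)" for z unfolding A_def by simp
  have s1: "(\<Sum>z<q. A z * B z) = (if a = b then 1 else 0)"
    using assms unfolding ab by (simp add: B_def)
  have sa: "(\<Sum>z<q. A z) = 1" using assms unfolding A_def by simp
  have sb: "(\<Sum>z<q. B z) = 1" using assms unfolding B_def by simp
  have s2: "(\<Sum>z<q. r * A z) + (\<Sum>z<q. r * B z) = 2 * r"
    by (simp add: sa sb flip: sum_distrib_left)
  have "(\<Sum>z<q. (A z - r) * (B z - r)) = (if a = b then 1 else 0) - 2 * r + real q * r^2"
    unfolding e sum_subtractf sum.distrib s1 s2 by (simp add: diff_diff_eq)
  also have "real q * r^2 = r" unfolding r_def using q by (simp add: power2_eq_square)
  finally show ?thesis unfolding r_def A_def B_def by simp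
qed

lemma psd_ak:
  assumes K: "psd_on (hamming_space q n) K" and i: "i < n"
  shows "psd_on (hamming_space q n) (\<lambda>x y. ak q i x y * K x y)"
  unfolding psd_on_def
proof (intro allI impI)
  fix C :: "nat list set" and w :: "nat list \<Rightarrow> real"
  assume C: "finite C" "C \<subseteq> hamming_space q n"
  define u :: "nat \<Rightarrow> nat list \<Rightarrow> real" where "u z x = (if x!i = z then 1 else 0) - 1 / real q" for z x
  have akx: "ak q i x y = (\<Sum>z<q. u z x * u z y)" if "x \<in> C" "y \<in> C" for x y
  proof -
    have "x!i < q" "y!i < q" using that C i unfolding hamming_space_def by auto
    then have "(if x!i = y!i then 1 else 0) - 1 / real q = (\<Sum>z<q. u z x * u z y)"
      unfolding u_def by (rule ak_sum)
    then show ?thesis unfolding ak_def by simp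
  qed
  have "(\<Sum>x\<in>C. \<Sum>y\<in>C. w x * w y * (ak q i x y * K x y)) =
        (\<Sum>x\<in>C. \<Sum>y\<in>C. \<Sum>z<q. (w x * u z x) * (w y * u z y) * K x y)"
  proof (intro sum.cong refl)
    fix x y assume xy: "x \<in> C" "y \<in> C"
    have "w x * w y * ((\<Sum>z<q. u z x * u z y) * K x y) = (\<Sum>z<q. w x * w y * (u z x * u z y * K x y))"
      by (simp only: sum_distrib_left sum_distrib_right)
    also have "\<dots> = (\<Sum>z<q. (w x * u z x) * (w y * u z y) * K x y)"
      by (intro sum.cong refl) (simp only: mult_ac)
    finally show "w x * w y * (ak q i x y * K x y) = (\<Sum>z<q. (w x * u z x) * (w y * u z y) * K x y)"
      unfolding akx[OF xy] .
  qed
  also have "\<dots> = (\<Sum>x\<in>C. \<Sum>z<q. \<Sum>y\<in>C. (w x * u z x) * (w y * u z y) * K x y)"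
    by (rule sum.cong[OF refl], rule sum.swap)
  also have "\<dots> = (\<Sum>z<q. \<Sum>x\<in>C. \<Sum>y\<in>C. (w x * u z x) * (w y * u z y) * K x y)"
    by (rule sum.swap)
  also have "\<dots> \<ge> 0"
  proof (rule sum_nonneg)
    fix z assume "z \<in> {..<q}"
    show "0 \<le> (\<Sum>x\<in>C. \<Sum>y\<in>C. (w x * u z x) * (w y * u z y) * K x y)"
      using K[unfolded psd_on_def, rule_format, OF C(1) C(2), of "\<lambda>x. w x * u z x"] by simp
  qed
  finally show "0 \<le> (\<Sum>x\<in>C. \<Sum>y\<in>C. w x * w y * (ak q i x y * K x y))" .
qed

lemma psd_EE: "j \<le> n \<Longrightarrow> psd_on (hamming_space q n) (EE q k j)"
proof (induction j arbitrary: k)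
  case 0
  show ?case
  proof (cases k)
    case 0
    have "EE q k 0 = (\<lambda>x y. 1)" using 0 by (simp add: fun_eq_iff)
    then show ?thesis using psd_one by metis
  next
    case (Suc k')
    have "EE q k 0 = (\<lambda>x y. 0)" using Suc by (simp add: fun_eq_iff)
    then show ?thesis using psd_zero by metis
  qed
next
  case (Suc j)
  show ?case
  proof (cases k)
    case 0
    have "EE q k (Suc j) = (\<lambda>x y. 1)" using 0 by (simp add: fun_eq_iff)
    then show ?thesis using psd_one by metis
  next
    case (Suc k')
    have j: "j < n" using Suc.prems by simp
    have "psd_on (hamming_space q n) (\<lambda>x y. EE q (Suc k') j x y + ak q j x y * EE q k' j x y)"
      by (rule psd_add[OF Suc.IH psd_ak[OF Suc.IH j]]) (use Suc.prems in auto)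
    moreover have "EE q k (Suc j) = (\<lambda>x y. EE q (Suc k') j x y + ak q j x y * EE q k' j x y)"
      using Suc by (simp add: fun_eq_iff)
    ultimately show ?thesis by simp
  qed
qed

lemma psd_sum_nonneg:
  assumes "psd_on H K" "finite C" "C \<subseteq> H"
  shows "0 \<le> (\<Sum>x\<in>C. \<Sum>y\<in>C. K x y)"
proof -
  have "0 \<le> (\<Sum>x\<in>C. \<Sum>y\<in>C. (\<lambda>_. 1::real) x * (\<lambda>_. 1::real) y * K x y)"
    using assms(1)[unfolded psd_on_def, rule_format, OF assms(2) assms(3), of "\<lambda>_. 1"] by simp
  then show ?thesis by simp
qed

lemma Fid:
  fixes n r D t :: real
  shows "(t + n*r)*(t-D)*(t+D)^2 = ff0 n r D + ff1 n r D * ep1 r n t + ff2 n r D * ep2 r n t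
     + ff3 n r D * ep3 r n t + ep4 r n t"
  unfolding ep1_def ep2_def ep3_def ep4_def ff0_def ff1_def ff2_def ff3_def
  by (simp add: algebra_simps power2_eq_square power3_eq_cube power4_eq_xxxx)

lemma finite_hamming: "finite (hamming_space q n)"
proof -
  have "hamming_space q n \<subseteq> {xs. set xs \<subseteq> {..<q} \<and> length xs = n}"
    unfolding hamming_space_def by (auto simp: in_set_conv_nth)
  moreover have "finite {xs. set xs \<subseteq> {..<q} \<and> length xs = n}"
    by (rule finite_lists_length_eq) simp
  ultimately show ?thesis by (rule finite_subset)
qed

lemma mc_self: "mc n x x = n" unfolding mc_def by simp

lemma lp_bound:
  fixes q n :: nat and D :: real and C :: "nat list set"
  assumes q: "q \<ge> 2" and C: "C \<subseteq> hamming_space q n"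
    and far: "\<And>x y. x \<in> C \<Longrightarrow> y \<in> C \<Longrightarrow> x \<noteq> y \<Longrightarrow> real (mc n x y) - real n / real q \<le> D"
    and f1: "ff1 (real n) (1/real q) D \<ge> 0" and f2: "ff2 (real n) (1/real q) D \<ge> 0"
    and f3: "ff3 (real n) (1/real q) D \<ge> 0"
  shows "real (card C) * real (card C) * ff0 (real n) (1/real q) D \<le>
     real (card C) * ((real n - real n / real q + real n * (1/real q)) * (real n - real n / real q - D)
        * (real n - real n / real q + D)^2)"
proof -
  define r where "r = 1 / real q"
  define nn where "nn = real n"
  have finC: "finite C" using C finite_hamming finite_subset by blast
  define Fp where "Fp t = (t + nn * r) * (t - D) * (t + D)^2" for t
  define g0 where "g0 = ff0 nn r D"
  define g1 where "g1 = ff1 nn r D"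
  define g2 where "g2 = ff2 nn r D"
  define g3 where "g3 = ff3 nn r D"
  have key: "Fp (tt q n x y) = g0 + g1 * EE q 1 n x y + g2 * (2 * EE q 2 n x y) + g3 * (6 * EE q 3 n x y)
      + 24 * EE q 4 n x y" for x y
  proof -
    have "Fp (tt q n x y) = g0 + g1 * ep1 r nn (tt q n x y) + g2 * ep2 r nn (tt q n x y)
       + g3 * ep3 r nn (tt q n x y) + ep4 r nn (tt q n x y)"
      unfolding Fp_def g0_def g1_def g2_def g3_def by (rule Fid)
    then show ?thesis using EE_closed[of q n x y] unfolding r_def nn_def by simp
  qed
  define S where "S k = (\<Sum>x\<in>C. \<Sum>y\<in>C. EE q k n x y)" for k
  have S0: "S k \<ge> 0" for k unfolding S_def
    by (rule psd_sum_nonneg[OF psd_EE[OF order_refl] finC C])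
  have "(\<Sum>x\<in>C. \<Sum>y\<in>C. Fp (tt q n x y)) =
     (\<Sum>x\<in>C. \<Sum>y\<in>C. g0) + g1 * S 1 + g2 * 2 * S 2 + g3 * 6 * S 3 + 24 * S 4"
    unfolding key S_def by (simp add: sum.distrib sum_distrib_left algebra_simps)
  also have "(\<Sum>x\<in>C. \<Sum>y\<in>C. g0) = real (card C) * real (card C) * g0" by simp
  finally have eq: "(\<Sum>x\<in>C. \<Sum>y\<in>C. Fp (tt q n x y)) =
     real (card C) * real (card C) * g0 + (g1 * S 1 + g2 * 2 * S 2 + g3 * 6 * S 3 + 24 * S 4)" by simp
  have "g1 * S 1 + g2 * 2 * S 2 + g3 * 6 * S 3 + 24 * S 4 \<ge> 0"
    using S0[of 1] S0[of 2] S0[of 3] S0[of 4] f1 f2 f3 unfolding g1_def g2_def g3_def r_def nn_def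
    by (intro add_nonneg_nonneg mult_nonneg_nonneg) auto
  then have lower: "real (card C) * real (card C) * g0 \<le> (\<Sum>x\<in>C. \<Sum>y\<in>C. Fp (tt q n x y))"
    using eq by simp
  define Fv where "Fv = Fp (nn - nn * r)"
  have ttx: "tt q n x x = nn - nn * r" for x unfolding tt_def mc_self nn_def r_def by simp
  have neg: "Fp (tt q n x y) \<le> 0" if "x \<in> C" "y \<in> C" "x \<noteq> y" for x y
  proof -
    have a: "tt q n x y + nn * r \<ge> 0" unfolding tt_def nn_def r_def by simp
    have b: "tt q n x y - D \<le> 0" using far[OF that] unfolding tt_def by simp
    have "(tt q n x y + nn * r) * (tt q n x y - D) \<le> 0" using a b by (rule mult_nonneg_nonpos)
    then show ?thesis unfolding Fp_def by (rule mult_nonpos_nonneg) simp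
  qed
  have row: "(\<Sum>y\<in>C. Fp (tt q n x y)) \<le> Fv" if x: "x \<in> C" for x
  proof -
    have "(\<Sum>y\<in>C. Fp (tt q n x y)) = Fp (tt q n x x) + (\<Sum>y\<in>C - {x}. Fp (tt q n x y))"
      using finC x by (rule sum.remove)
    also have "(\<Sum>y\<in>C - {x}. Fp (tt q n x y)) \<le> 0"
      using neg x by (intro sum_nonpos) auto
    finally show ?thesis unfolding Fv_def ttx by simp
  qed
  have "(\<Sum>x\<in>C. \<Sum>y\<in>C. Fp (tt q n x y)) \<le> (\<Sum>x\<in>C. Fv)"
    using row by (rule sum_mono)
  also have "\<dots> = real (card C) * Fv" by simp
  finally have upper: "(\<Sum>x\<in>C. \<Sum>y\<in>C. Fp (tt q n x y)) \<le> real (card C) * Fv" .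
  show ?thesis using lower upper unfolding Fv_def Fp_def g0_def r_def nn_def by simp
qed
lemma subst0:
  fixes Q n D c :: real
  assumes Q: "Q > 1" and nn: "4*n*(Q-1) = (2*Q*D-(2*c+Q-4))^2 - Q^2 + 8*(Q-1)"
  shows "Q^4*(Q-1)^2 * ff0 n (1/Q) D = a04 Q c * D^4 + a03 Q c * D^3 + a02 Q c * D^2 + a01 Q c * D^1 + a00 Q c * D^0"
proof -
  have 1: "Q^4 * ff0 n (1/Q) D = (n^2*D*Q^2 - n^2*D*Q + 4*n^2*Q^2 - 9*n^2*Q + 5*n^2 - n*D^3*Q^3 - n*D^2*Q^3 + n*D^2*Q^2 + n*D*Q^3 - 3*n*D*Q^2 + 2*n*D*Q + n*Q^3 - 7*n*Q^2 + 12*n*Q - 6*n)"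
    using Q unfolding ff0_def by (simp add: field_simps power2_eq_square power3_eq_cube power4_eq_xxxx pow5 pow6)
  have 2: "16*(Q-1)^2 * (n^2*D*Q^2 - n^2*D*Q + 4*n^2*Q^2 - 9*n^2*Q + 5*n^2 - n*D^3*Q^3 - n*D^2*Q^3 + n*D^2*Q^2 + n*D*Q^3 - 3*n*D*Q^2 + 2*n*D*Q + n*Q^3 - 7*n*Q^2 + 12*n*Q - 6*n) = (- 4*D^3*Q^4*(4*n*(Q-1)) + 4*D^3*Q^3*(4*n*(Q-1)) - 4*D^2*Q^4*(4*n*(Q-1)) + 8*D^2*Q^3*(4*n*(Q-1)) - 4*D^2*Q^2*(4*n*(Q-1)) + 4*D*Q^4*(4*n*(Q-1)) - 16*D*Q^3*(4*n*(Q-1)) + D*Q^2*(4*n*(Q-1))^2 + 20*D*Q^2*(4*n*(Q-1)) - D*Q*(4*n*(Q-1))^2 - 8*D*Q*(4*n*(Q-1)) + 4*Q^4*(4*n*(Q-1)) - 32*Q^3*(4*n*(Q-1)) + 4*Q^2*(4*n*(Q-1))^2 + 76*Q^2*(4*n*(Q-1)) - 9*Q*(4*n*(Q-1))^2 - 72*Q*(4*n*(Q-1)) + 5*(4*n*(Q-1))^2 + 24*(4*n*(Q-1)))"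
    by (simp add: algebra_simps power2_eq_square power3_eq_cube power4_eq_xxxx pow5 pow6)
  have 3: "(- 4*D^3*Q^4*((2*Q*D-(2*c+Q-4))^2 - Q^2 + 8*(Q-1)) + 4*D^3*Q^3*((2*Q*D-(2*c+Q-4))^2 - Q^2 + 8*(Q-1)) - 4*D^2*Q^4*((2*Q*D-(2*c+Q-4))^2 - Q^2 + 8*(Q-1)) + 8*D^2*Q^3*((2*Q*D-(2*c+Q-4))^2 - Q^2 + 8*(Q-1)) - 4*D^2*Q^2*((2*Q*D-(2*c+Q-4))^2 - Q^2 + 8*(Q-1)) + 4*D*Q^4*((2*Q*D-(2*c+Q-4))^2 - Q^2 + 8*(Q-1)) - 16*D*Q^3*((2*Q*D-(2*c+Q-4))^2 - Q^2 + 8*(Q-1)) + D*Q^2*((2*Q*D-(2*c+Q-4))^2 - Q^2 + 8*(Q-1))^2 + 20*D*Q^2*((2*Q*D-(2*c+Q-4))^2 - Q^2 + 8*(Q-1)) - D*Q*((2*Q*D-(2*c+Q-4))^2 - Q^2 + 8*(Q-1))^2 - 8*D*Q*((2*Q*D-(2*c+Q-4))^2 - Q^2 + 8*(Q-1)) + 4*Q^4*((2*Q*D-(2*c+Q-4))^2 - Q^2 + 8*(Q-1)) - 32*Q^3*((2*Q*D-(2*c+Q-4))^2 - Q^2 + 8*(Q-1)) + 4*Q^2*((2*Q*D-(2*c+Q-4))^2 - Q^2 + 8*(Q-1))^2 + 76*Q^2*((2*Q*D-(2*c+Q-4))^2 - Q^2 + 8*(Q-1)) - 9*Q*((2*Q*D-(2*c+Q-4))^2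 - Q^2 + 8*(Q-1))^2 - 72*Q*((2*Q*D-(2*c+Q-4))^2 - Q^2 + 8*(Q-1)) + 5*((2*Q*D-(2*c+Q-4))^2 - Q^2 + 8*(Q-1))^2 + 24*((2*Q*D-(2*c+Q-4))^2 - Q^2 + 8*(Q-1))) = 16*(a04 Q c * D^4 + a03 Q c * D^3 + a02 Q c * D^2 + a01 Q c * D^1 + a00 Q c * D^0)"
    unfolding a04_def a03_def a02_def a01_def a00_def
    by (simp add: algebra_simps power2_eq_square power3_eq_cube power4_eq_xxxx pow5 pow6)
  have "16*(Q^4*(Q-1)^2 * ff0 n (1/Q) D) = 16*(Q-1)^2*(Q^4 * ff0 n (1/Q) D)" by (simp add: algebra_simps)
  also have "... = 16*(Q-1)^2 * (n^2*D*Q^2 - n^2*D*Q + 4*n^2*Q^2 - 9*n^2*Q + 5*n^2 - n*D^3*Q^3 - n*D^2*Q^3 + n*D^2*Q^2 + n*D*Q^3 - 3*n*D*Q^2 + 2*n*D*Q + n*Q^3 - 7*n*Q^2 + 12*n*Q - 6*n)" by (simp only: 1)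
  also have "... = (- 4*D^3*Q^4*(4*n*(Q-1)) + 4*D^3*Q^3*(4*n*(Q-1)) - 4*D^2*Q^4*(4*n*(Q-1)) + 8*D^2*Q^3*(4*n*(Q-1)) - 4*D^2*Q^2*(4*n*(Q-1)) + 4*D*Q^4*(4*n*(Q-1)) - 16*D*Q^3*(4*n*(Q-1)) + D*Q^2*(4*n*(Q-1))^2 + 20*D*Q^2*(4*n*(Q-1)) - D*Q*(4*n*(Q-1))^2 - 8*D*Q*(4*n*(Q-1)) + 4*Q^4*(4*n*(Q-1)) - 32*Q^3*(4*n*(Q-1)) + 4*Q^2*(4*n*(Q-1))^2 + 76*Q^2*(4*n*(Q-1)) - 9*Q*(4*n*(Q-1))^2 - 72*Q*(4*n*(Q-1)) + 5*(4*n*(Q-1))^2 + 24*(4*n*(Q-1)))" by (rule 2)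
  also have "... = (- 4*D^3*Q^4*((2*Q*D-(2*c+Q-4))^2 - Q^2 + 8*(Q-1)) + 4*D^3*Q^3*((2*Q*D-(2*c+Q-4))^2 - Q^2 + 8*(Q-1)) - 4*D^2*Q^4*((2*Q*D-(2*c+Q-4))^2 - Q^2 + 8*(Q-1)) + 8*D^2*Q^3*((2*Q*D-(2*c+Q-4))^2 - Q^2 + 8*(Q-1)) - 4*D^2*Q^2*((2*Q*D-(2*c+Q-4))^2 - Q^2 + 8*(Q-1)) + 4*D*Q^4*((2*Q*D-(2*c+Q-4))^2 - Q^2 + 8*(Q-1)) - 16*D*Q^3*((2*Q*D-(2*c+Q-4))^2 - Q^2 + 8*(Q-1)) + D*Q^2*((2*Q*D-(2*c+Q-4))^2 - Q^2 + 8*(Q-1))^2 + 20*D*Q^2*((2*Q*D-(2*c+Q-4))^2 - Q^2 + 8*(Q-1)) - D*Q*((2*Q*D-(2*c+Q-4))^2 - Q^2 + 8*(Q-1))^2 - 8*D*Q*((2*Q*D-(2*c+Q-4))^2 - Q^2 + 8*(Q-1)) + 4*Q^4*((2*Q*D-(2*c+Q-4))^2 - Q^2 + 8*(Q-1)) - 32*Q^3*((2*Q*D-(2*c+Q-4))^2 - Q^2 + 8*(Q-1)) + 4*Q^2*((2*Q*D-(2*c+Q-4))^2 - Q^2 + 8*(Q-1))^2 + 76*Q^2*((2*Q*D-(2*c+Q-4))^2 - Q^2 + 8*(Q-1)) - 9*Q*((2*Q*D-(2*c+Q-4))^2 - Q^2 + 8*(Q-1))^2 - 72*Q*((2*Q*D-(2*c+Q-4))^2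 - Q^2 + 8*(Q-1)) + 5*((2*Q*D-(2*c+Q-4))^2 - Q^2 + 8*(Q-1))^2 + 24*((2*Q*D-(2*c+Q-4))^2 - Q^2 + 8*(Q-1)))" by (simp only: nn)
  also have "... = 16*(a04 Q c * D^4 + a03 Q c * D^3 + a02 Q c * D^2 + a01 Q c * D^1 + a00 Q c * D^0)" by (rule 3)
  finally show ?thesis by simp
qed

lemma subst1:
  fixes Q n D c :: real
  assumes Q: "Q > 1" and nn: "4*n*(Q-1) = (2*Q*D-(2*c+Q-4))^2 - Q^2 + 8*(Q-1)"
  shows "Q^4*(Q-1)^2 * ff1 n (1/Q) D = a14 Q c * D^4 + a13 Q c * D^3 + a12 Q c * D^2 + a11 Q c * D^1 + a10 Q c * D^0"
proof -
  have 1: "Q^4 * ff1 n (1/Q) D = (3*n^2*Q^2 - 3*n^2*Q - n*D^2*Q^3 + 4*n*D*Q^3 - 5*n*D*Q^2 + 11*n*Q^3 - 36*n*Q^2 + 26*n*Q - D^3*Q^4 - D^2*Q^4 + 2*D^2*Q^3 + D*Q^4 - 6*D*Q^3 + 6*D*Q^2 + Q^4 - 14*Q^3 + 36*Q^2 - 24*Q)"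
    using Q unfolding ff1_def by (simp add: field_simps power2_eq_square power3_eq_cube power4_eq_xxxx pow5 pow6)
  have 2: "16*(Q-1)^2 * (3*n^2*Q^2 - 3*n^2*Q - n*D^2*Q^3 + 4*n*D*Q^3 - 5*n*D*Q^2 + 11*n*Q^3 - 36*n*Q^2 + 26*n*Q - D^3*Q^4 - D^2*Q^4 + 2*D^2*Q^3 + D*Q^4 - 6*D*Q^3 + 6*D*Q^2 + Q^4 - 14*Q^3 + 36*Q^2 - 24*Q) = (- 16*D^3*Q^6 + 32*D^3*Q^5 - 16*D^3*Q^4 - 16*D^2*Q^6 + 64*D^2*Q^5 - 4*D^2*Q^4*(4*n*(Q-1)) - 80*D^2*Q^4 + 4*D^2*Q^3*(4*n*(Q-1)) + 32*D^2*Q^3 + 16*D*Q^6 - 128*D*Q^5 + 16*D*Q^4*(4*n*(Q-1)) + 304*D*Q^4 - 36*D*Q^3*(4*n*(Q-1)) - 288*D*Q^3 + 20*D*Q^2*(4*n*(Q-1)) + 96*D*Q^2 + 16*Q^6 - 256*Q^5 + 44*Q^4*(4*n*(Q-1)) + 1040*Q^4 - 188*Q^3*(4*n*(Q-1)) - 1760*Q^3 + 3*Q^2*(4*n*(Q-1))^2 + 248*Q^2*(4*n*(Q-1)) + 1344*Q^2 - 3*Q*(4*n*(Q-1))^2 - 104*Q*(4*n*(Q-1)) - 384*Q)"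
    by (simp add: algebra_simps power2_eq_square power3_eq_cube power4_eq_xxxx pow5 pow6)
  have 3: "(- 16*D^3*Q^6 + 32*D^3*Q^5 - 16*D^3*Q^4 - 16*D^2*Q^6 + 64*D^2*Q^5 - 4*D^2*Q^4*((2*Q*D-(2*c+Q-4))^2 - Q^2 + 8*(Q-1)) - 80*D^2*Q^4 + 4*D^2*Q^3*((2*Q*D-(2*c+Q-4))^2 - Q^2 + 8*(Q-1)) + 32*D^2*Q^3 + 16*D*Q^6 - 128*D*Q^5 + 16*D*Q^4*((2*Q*D-(2*c+Q-4))^2 - Q^2 + 8*(Q-1)) + 304*D*Q^4 - 36*D*Q^3*((2*Q*D-(2*c+Q-4))^2 - Q^2 + 8*(Q-1)) - 288*D*Q^3 + 20*D*Q^2*((2*Q*D-(2*c+Q-4))^2 - Q^2 + 8*(Q-1)) + 96*D*Q^2 + 16*Q^6 - 256*Q^5 + 44*Q^4*((2*Q*D-(2*c+Q-4))^2 - Q^2 + 8*(Q-1)) + 1040*Q^4 - 188*Q^3*((2*Q*D-(2*c+Q-4))^2 - Q^2 + 8*(Q-1)) - 1760*Q^3 + 3*Q^2*((2*Q*D-(2*c+Q-4))^2 - Q^2 + 8*(Q-1))^2 + 248*Q^2*((2*Q*D-(2*c+Q-4))^2 - Q^2 + 8*(Q-1)) + 1344*Q^2 - 3*Q*((2*Q*D-(2*c+Q-4))^2 - Q^2 + 8*(Q-1))^2 - 104*Q*((2*Q*D-(2*c+Q-4))^2 - Q^2 + 8*(Q-1)) - 384*Q) = 16*(a14 Q c * D^4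 + a13 Q c * D^3 + a12 Q c * D^2 + a11 Q c * D^1 + a10 Q c * D^0)"
    unfolding a14_def a13_def a12_def a11_def a10_def
    by (simp add: algebra_simps power2_eq_square power3_eq_cube power4_eq_xxxx pow5 pow6)
  have "16*(Q^4*(Q-1)^2 * ff1 n (1/Q) D) = 16*(Q-1)^2*(Q^4 * ff1 n (1/Q) D)" by (simp add: algebra_simps)
  also have "... = 16*(Q-1)^2 * (3*n^2*Q^2 - 3*n^2*Q - n*D^2*Q^3 + 4*n*D*Q^3 - 5*n*D*Q^2 + 11*n*Q^3 - 36*n*Q^2 + 26*n*Q - D^3*Q^4 - D^2*Q^4 + 2*D^2*Q^3 + D*Q^4 - 6*D*Q^3 + 6*D*Q^2 + Q^4 - 14*Q^3 + 36*Q^2 - 24*Q)" by (simp only: 1)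
  also have "... = (- 16*D^3*Q^6 + 32*D^3*Q^5 - 16*D^3*Q^4 - 16*D^2*Q^6 + 64*D^2*Q^5 - 4*D^2*Q^4*(4*n*(Q-1)) - 80*D^2*Q^4 + 4*D^2*Q^3*(4*n*(Q-1)) + 32*D^2*Q^3 + 16*D*Q^6 - 128*D*Q^5 + 16*D*Q^4*(4*n*(Q-1)) + 304*D*Q^4 - 36*D*Q^3*(4*n*(Q-1)) - 288*D*Q^3 + 20*D*Q^2*(4*n*(Q-1)) + 96*D*Q^2 + 16*Q^6 - 256*Q^5 + 44*Q^4*(4*n*(Q-1)) + 1040*Q^4 - 188*Q^3*(4*n*(Q-1)) - 1760*Q^3 + 3*Q^2*(4*n*(Q-1))^2 + 248*Q^2*(4*n*(Q-1)) + 1344*Q^2 - 3*Q*(4*n*(Q-1))^2 - 104*Q*(4*n*(Q-1)) - 384*Q)" by (rule 2)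
  also have "... = (- 16*D^3*Q^6 + 32*D^3*Q^5 - 16*D^3*Q^4 - 16*D^2*Q^6 + 64*D^2*Q^5 - 4*D^2*Q^4*((2*Q*D-(2*c+Q-4))^2 - Q^2 + 8*(Q-1)) - 80*D^2*Q^4 + 4*D^2*Q^3*((2*Q*D-(2*c+Q-4))^2 - Q^2 + 8*(Q-1)) + 32*D^2*Q^3 + 16*D*Q^6 - 128*D*Q^5 + 16*D*Q^4*((2*Q*D-(2*c+Q-4))^2 - Q^2 + 8*(Q-1)) + 304*D*Q^4 - 36*D*Q^3*((2*Q*D-(2*c+Q-4))^2 - Q^2 + 8*(Q-1)) - 288*D*Q^3 + 20*D*Q^2*((2*Q*D-(2*c+Q-4))^2 - Q^2 + 8*(Q-1)) + 96*D*Q^2 + 16*Q^6 - 256*Q^5 + 44*Q^4*((2*Q*D-(2*c+Q-4))^2 - Q^2 + 8*(Q-1)) + 1040*Q^4 - 188*Q^3*((2*Q*D-(2*c+Q-4))^2 - Q^2 + 8*(Q-1)) - 1760*Q^3 + 3*Q^2*((2*Q*D-(2*c+Q-4))^2 - Q^2 + 8*(Q-1))^2 + 248*Q^2*((2*Q*D-(2*c+Q-4))^2 - Q^2 + 8*(Q-1)) + 1344*Q^2 - 3*Q*((2*Q*D-(2*c+Q-4))^2 - Q^2 + 8*(Q-1))^2 - 104*Q*((2*Q*D-(2*c+Q-4))^2 - Q^2 + 8*(Q-1)) - 384*Q)" by (simp only: nn)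
  also have "... = 16*(a14 Q c * D^4 + a13 Q c * D^3 + a12 Q c * D^2 + a11 Q c * D^1 + a10 Q c * D^0)" by (rule 3)
  finally show ?thesis by simp
qed

lemma subst2:
  fixes Q n D c :: real
  assumes Q: "Q > 1" and nn: "4*n*(Q-1) = (2*Q*D-(2*c+Q-4))^2 - Q^2 + 8*(Q-1)"
  shows "Q^4*(Q-1)^2 * (2 * ff2 n (1/Q) D) = a23 Q c * D^3 + a22 Q c * D^2 + a21 Q c * D^1 + a20 Q c * D^0"
proof -
  have 1: "Q^4 * (2 * ff2 n (1/Q) D) = (2*n*D*Q^3 + 18*n*Q^3 - 24*n*Q^2 - 2*D^2*Q^4 + 6*D*Q^4 - 12*D*Q^3 + 14*Q^4 - 72*Q^3 + 72*Q^2)"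
    using Q unfolding ff2_def by (simp add: field_simps power2_eq_square power3_eq_cube power4_eq_xxxx pow5 pow6)
  have 2: "16*(Q-1)^2 * (2*n*D*Q^3 + 18*n*Q^3 - 24*n*Q^2 - 2*D^2*Q^4 + 6*D*Q^4 - 12*D*Q^3 + 14*Q^4 - 72*Q^3 + 72*Q^2) = (- 32*D^2*Q^6 + 64*D^2*Q^5 - 32*D^2*Q^4 + 96*D*Q^6 - 384*D*Q^5 + 8*D*Q^4*(4*n*(Q-1)) + 480*D*Q^4 - 8*D*Q^3*(4*n*(Q-1)) - 192*D*Q^3 + 224*Q^6 - 1600*Q^5 + 72*Q^4*(4*n*(Q-1)) + 3680*Q^4 - 168*Q^3*(4*n*(Q-1)) - 3456*Q^3 + 96*Q^2*(4*n*(Q-1)) + 1152*Q^2)"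
    by (simp add: algebra_simps power2_eq_square power3_eq_cube power4_eq_xxxx pow5 pow6)
  have 3: "(- 32*D^2*Q^6 + 64*D^2*Q^5 - 32*D^2*Q^4 + 96*D*Q^6 - 384*D*Q^5 + 8*D*Q^4*((2*Q*D-(2*c+Q-4))^2 - Q^2 + 8*(Q-1)) + 480*D*Q^4 - 8*D*Q^3*((2*Q*D-(2*c+Q-4))^2 - Q^2 + 8*(Q-1)) - 192*D*Q^3 + 224*Q^6 - 1600*Q^5 + 72*Q^4*((2*Q*D-(2*c+Q-4))^2 - Q^2 + 8*(Q-1)) + 3680*Q^4 - 168*Q^3*((2*Q*D-(2*c+Q-4))^2 - Q^2 + 8*(Q-1)) - 3456*Q^3 + 96*Q^2*((2*Q*D-(2*c+Q-4))^2 - Q^2 + 8*(Q-1)) + 1152*Q^2) = 16*(a23 Q c * D^3 + a22 Q c * D^2 + a21 Q c * D^1 + a20 Q c * D^0)"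
    unfolding a23_def a22_def a21_def a20_def
    by (simp add: algebra_simps power2_eq_square power3_eq_cube power4_eq_xxxx pow5 pow6)
  have "16*(Q^4*(Q-1)^2 * (2 * ff2 n (1/Q) D)) = 16*(Q-1)^2*(Q^4 * (2 * ff2 n (1/Q) D))" by (simp add: algebra_simps)
  also have "... = 16*(Q-1)^2 * (2*n*D*Q^3 + 18*n*Q^3 - 24*n*Q^2 - 2*D^2*Q^4 + 6*D*Q^4 - 12*D*Q^3 + 14*Q^4 - 72*Q^3 + 72*Q^2)" by (simp only: 1)
  also have "... = (- 32*D^2*Q^6 + 64*D^2*Q^5 - 32*D^2*Q^4 + 96*D*Q^6 - 384*D*Q^5 + 8*D*Q^4*(4*n*(Q-1)) + 480*D*Q^4 - 8*D*Q^3*(4*n*(Q-1)) - 192*D*Q^3 + 224*Q^6 - 1600*Q^5 + 72*Q^4*(4*n*(Q-1)) + 3680*Q^4 - 168*Q^3*(4*n*(Q-1)) - 3456*Q^3 + 96*Q^2*(4*n*(Q-1)) + 1152*Q^2)" by (rule 2)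
  also have "... = (- 32*D^2*Q^6 + 64*D^2*Q^5 - 32*D^2*Q^4 + 96*D*Q^6 - 384*D*Q^5 + 8*D*Q^4*((2*Q*D-(2*c+Q-4))^2 - Q^2 + 8*(Q-1)) + 480*D*Q^4 - 8*D*Q^3*((2*Q*D-(2*c+Q-4))^2 - Q^2 + 8*(Q-1)) - 192*D*Q^3 + 224*Q^6 - 1600*Q^5 + 72*Q^4*((2*Q*D-(2*c+Q-4))^2 - Q^2 + 8*(Q-1)) + 3680*Q^4 - 168*Q^3*((2*Q*D-(2*c+Q-4))^2 - Q^2 + 8*(Q-1)) - 3456*Q^3 + 96*Q^2*((2*Q*D-(2*c+Q-4))^2 - Q^2 + 8*(Q-1)) + 1152*Q^2)" by (simp only: nn)
  also have "... = 16*(a23 Q c * D^3 + a22 Q c * D^2 + a21 Q c * D^1 + a20 Q c * D^0)" by (rule 3)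
  finally show ?thesis by simp
qed

lemma subst3:
  fixes Q n D c :: real
  assumes Q: "Q > 1" and nn: "4*n*(Q-1) = (2*Q*D-(2*c+Q-4))^2 - Q^2 + 8*(Q-1)"
  shows "Q^4*(Q-1)^2 * (6 * ff3 n (1/Q) D) = a32 Q c * D^2 + a31 Q c * D^1 + a30 Q c * D^0"
proof -
  have 1: "Q^4 * (6 * ff3 n (1/Q) D) = (6*n*Q^3 + 6*D*Q^4 + 36*Q^4 - 72*Q^3)"
    using Q unfolding ff3_def by (simp add: field_simps power2_eq_square power3_eq_cube power4_eq_xxxx pow5 pow6)
  have 2: "16*(Q-1)^2 * (6*n*Q^3 + 6*D*Q^4 + 36*Q^4 - 72*Q^3) = (96*D*Q^6 - 192*D*Q^5 + 96*D*Q^4 + 576*Q^6 - 2304*Q^5 + 24*Q^4*(4*n*(Q-1)) + 2880*Q^4 - 24*Q^3*(4*n*(Q-1)) - 1152*Q^3)"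
    by (simp add: algebra_simps power2_eq_square power3_eq_cube power4_eq_xxxx pow5 pow6)
  have 3: "(96*D*Q^6 - 192*D*Q^5 + 96*D*Q^4 + 576*Q^6 - 2304*Q^5 + 24*Q^4*((2*Q*D-(2*c+Q-4))^2 - Q^2 + 8*(Q-1)) + 2880*Q^4 - 24*Q^3*((2*Q*D-(2*c+Q-4))^2 - Q^2 + 8*(Q-1)) - 1152*Q^3) = 16*(a32 Q c * D^2 + a31 Q c * D^1 + a30 Q c * D^0)"
    unfolding a32_def a31_def a30_def
    by (simp add: algebra_simps power2_eq_square power3_eq_cube power4_eq_xxxx pow5 pow6)
  have "16*(Q^4*(Q-1)^2 * (6 * ff3 n (1/Q) D)) = 16*(Q-1)^2*(Q^4 * (6 * ff3 n (1/Q) D))" by (simp add: algebra_simps)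
  also have "... = 16*(Q-1)^2 * (6*n*Q^3 + 6*D*Q^4 + 36*Q^4 - 72*Q^3)" by (simp only: 1)
  also have "... = (96*D*Q^6 - 192*D*Q^5 + 96*D*Q^4 + 576*Q^6 - 2304*Q^5 + 24*Q^4*(4*n*(Q-1)) + 2880*Q^4 - 24*Q^3*(4*n*(Q-1)) - 1152*Q^3)" by (rule 2)
  also have "... = (96*D*Q^6 - 192*D*Q^5 + 96*D*Q^4 + 576*Q^6 - 2304*Q^5 + 24*Q^4*((2*Q*D-(2*c+Q-4))^2 - Q^2 + 8*(Q-1)) + 2880*Q^4 - 24*Q^3*((2*Q*D-(2*c+Q-4))^2 - Q^2 + 8*(Q-1)) - 1152*Q^3)" by (simp only: nn)
  also have "... = 16*(a32 Q c * D^2 + a31 Q c * D^1 + a30 Q c * D^0)" by (rule 3)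
  finally show ?thesis by simp
qed
lemma hd_mc:
  assumes "x \<in> hamming_space q n" "y \<in> hamming_space q n"
  shows "real (hamming_dist x y) = real n - real (mc n x y)"
proof -
  have lx: "length x = n" using assms unfolding hamming_space_def by auto
  have "{i. i < length x \<and> x!i \<noteq> y!i} = {..<n} - {i. i < n \<and> x!i = y!i}" using lx by auto
  then have "hamming_dist x y = card ({..<n} - {i. i < n \<and> x!i = y!i})"
    unfolding hamming_dist_def by simp
  also have "\<dots> = card {..<n} - mc n x y"
    unfolding mc_def by (rule card_Diff_subset) auto
  finally have "hamming_dist x y = card {..<n} - mc n x y" .
  moreover have "mc n x y \<le> n" unfolding mc_def
    using card_mono[of "{..<n}" "{i. i < n \<and> x!i = y!i}"] by auto
  ultimately show ?thesis by simp
qed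

lemma low4:
  fixes D b3 b2 b1 b0 K :: real
  assumes "D \<ge> 1" "\<bar>b3\<bar> + \<bar>b2\<bar> + \<bar>b1\<bar> + \<bar>b0\<bar> \<le> K"
  shows "b3 * D^3 + b2 * D^2 + b1 * D^1 + b0 * D^0 \<ge> - K * D^3"
proof -
  have d: "D^2 \<le> D^3" "D \<le> D^3" "1 \<le> D^3" using assms(1)
    by (auto simp: power_increasing[of 2 3 D, simplified] power_increasing[of 1 3 D, simplified]
        one_le_power)
  have "\<bar>b3 * D^3\<bar> \<le> \<bar>b3\<bar> * D^3" using assms(1) by (simp add: abs_mult)
  moreover have "\<bar>b2 * D^2\<bar> \<le> \<bar>b2\<bar> * D^3" using assms(1) d by (simp add: abs_mult mult_left_mono)
  moreover have "\<bar>b1 * D\<bar> \<le> \<bar>b1\<bar> * D^3" using assms(1) d by (simp add: abs_mult mult_left_mono)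
  moreover have "\<bar>b0\<bar> \<le> \<bar>b0\<bar> * D^3" using d by (simp add: mult_le_cancel_left1)
  moreover have "(\<bar>b3\<bar> + \<bar>b2\<bar> + \<bar>b1\<bar> + \<bar>b0\<bar>) * D^3 \<le> K * D^3"
    using assms by (intro mult_right_mono) auto
  ultimately show ?thesis by (simp add: algebra_simps, (linarith)?)
qed

lemma low3:
  fixes D b2 b1 b0 K :: real
  assumes "D \<ge> 1" "\<bar>b2\<bar> + \<bar>b1\<bar> + \<bar>b0\<bar> \<le> K"
  shows "b2 * D^2 + b1 * D^1 + b0 * D^0 \<ge> - K * D^2"
proof -
  have d1: "1 \<le> D^2" using assms(1) by (simp add: one_le_power)
  have "D * 1 \<le> D * D" using assms(1) by (intro mult_left_mono) auto
  then have d2: "D \<le> D^2" by (simp add: power2_eq_square)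
  note d = d2 d1
  have "\<bar>b2 * D^2\<bar> \<le> \<bar>b2\<bar> * D^2" using assms(1) by (simp add: abs_mult)
  moreover have "\<bar>b1 * D\<bar> \<le> \<bar>b1\<bar> * D^2" using assms(1) d by (simp add: abs_mult mult_left_mono)
  moreover have "\<bar>b0\<bar> \<le> \<bar>b0\<bar> * D^2" using d by (simp add: mult_le_cancel_left1)
  moreover have "(\<bar>b2\<bar> + \<bar>b1\<bar> + \<bar>b0\<bar>) * D^2 \<le> K * D^2"
    using assms by (intro mult_right_mono) auto
  ultimately show ?thesis by (simp add: algebra_simps, (linarith)?)
qed

lemma low2:
  fixes D b1 b0 K :: real
  assumes "D \<ge> 1" "\<bar>b1\<bar> + \<bar>b0\<bar> \<le> K"
  shows "b1 * D^1 + b0 * D^0 \<ge> - K * D"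
proof -
  have "\<bar>b1 * D\<bar> \<le> \<bar>b1\<bar> * D" using assms(1) by (simp add: abs_mult)
  moreover have "\<bar>b0\<bar> \<le> \<bar>b0\<bar> * D" using assms(1) by (simp add: mult_le_cancel_left1)
  moreover have "(\<bar>b1\<bar> + \<bar>b0\<bar>) * D \<le> K * D"
    using assms by (intro mult_right_mono) auto
  ultimately show ?thesis by (simp add: algebra_simps, (linarith)?)
qed

lemma asym_ineq:
  fixes D K \<epsilon> :: real
  assumes "\<epsilon> > 0" "K \<ge> 0" "D \<ge> 1" "D \<ge> (89 + (1+\<epsilon>)*K)/\<epsilon>"
  shows "(D+2)^4 + (D+2)^2*D \<le> (1+\<epsilon>) * (D^4 - K*D^3)"
proof -
  have D3: "D^3 \<ge> 1" "D^2 \<le> D^3" "D \<le> D^3" using assms(3)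
    by (auto simp: power_increasing[of 2 3 D, simplified] power_increasing[of 1 3 D, simplified]
        one_le_power)
  have "(D+2)^4 + (D+2)^2*D = D^4 + 9*D^3 + 28*D^2 + 36*D + 16"
    by (simp add: algebra_simps power2_eq_square power3_eq_cube power4_eq_xxxx)
  also have "\<dots> \<le> D^4 + 89 * D^3" using D3 by linarith
  also have "\<dots> \<le> (1+\<epsilon>) * (D^4 - K*D^3)"
  proof -
    have "89 + (1+\<epsilon>)*K \<le> \<epsilon> * D" using assms(1,4) by (simp add: field_simps)
    then have "(89 + (1+\<epsilon>)*K) * D^3 \<le> (\<epsilon> * D) * D^3"
      using D3 assms(3) by (intro mult_right_mono) auto
    then show ?thesis using assms(3) by (simp add: algebra_simps power3_eq_cube power4_eq_xxxx)
  qed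
  finally show ?thesis .
qed

lemma lin_aux:
  fixes a k d r :: real
  assumes "0 \<le> (a - 1) * k" "- k \<le> r"
  shows "a * (d - k) \<le> a * d + r"
proof -
  have e1: "(a - 1) * k = a * k - k" by (simp add: algebra_simps)
  have e2: "a * (d - k) = a * d - a * k" by (simp add: algebra_simps)
  show ?thesis unfolding e2 using assms e1 by linarith
qed
theorem theorem6:
  fixes q :: nat
  assumes "q \<ge> 2"
  shows "\<forall>\<epsilon>>0. \<exists>N. \<forall>n\<ge>N. \<forall>c::real.
     (let S1 = sqrt (real q ^ 2 + 4 * (real q - 1) * (real n - 2));
          S2 = sqrt (real q ^ 2 + 4 * (real q - 1) * (real n - 3));
          s = (S1 - real n * (real q - 2) + 2 * c + real q - 4) / (real n * real q)
      in n \<ge> 3 \<and> 0 \<le> c \<and> c < (real q - 1) * (1 - 2 / (S1 + S2)) \<and> s \<in> T_set n \<longrightarrow>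
         real (A_code q n s) \<le> (1 + \<epsilon>) * (real q * (real q - 1)^2 * (real n)^2 / (2 * (real q - c))))"
proof (intro allI impI)
  fix \<epsilon> :: real assume eps: "\<epsilon> > 0"
  define Q where "Q = real q"
  have Q2: "Q \<ge> 2" using assms unfolding Q_def by simp
  define G0 where "G0 c = \<bar>a03 Q c\<bar> + \<bar>a02 Q c\<bar> + \<bar>a01 Q c\<bar> + \<bar>a00 Q c\<bar>" for c
  define G1 where "G1 c = \<bar>a13 Q c\<bar> + \<bar>a12 Q c\<bar> + \<bar>a11 Q c\<bar> + \<bar>a10 Q c\<bar>" for c
  define G2 where "G2 c = \<bar>a22 Q c\<bar> + \<bar>a21 Q c\<bar> + \<bar>a20 Q c\<bar>" for c
  define G3 where "G3 c = \<bar>a31 Q c\<bar> + \<bar>a30 Q c\<bar>" for c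
  define Kc where "Kc c = G0 c + G1 c + G2 c + G3 c" for c
  have Gnn: "G0 c \<ge> 0" "G1 c \<ge> 0" "G2 c \<ge> 0" "G3 c \<ge> 0" for c
    unfolding G0_def G1_def G2_def G3_def by (intro add_nonneg_nonneg abs_ge_zero)+
  have cont: "continuous_on {0..Q} Kc"
    unfolding Kc_def G0_def G1_def G2_def G3_def a03_def a02_def a01_def a00_def a13_def a12_def a11_def a10_def
      a22_def a21_def a20_def a31_def a30_def
    by (intro continuous_intros)
  obtain c0 where c0: "\<forall>c\<in>{0..Q}. Kc c \<le> Kc c0"
    using continuous_attains_sup[OF compact_Icc _ cont] Q2 by fastforce
  define K where "K = Kc c0"
  have K0: "K \<ge> 0" unfolding K_def Kc_def using Gnn[of c0] by linarith
  have Kc_le: "\<And>c. 0 \<le> c \<Longrightarrow> c \<le> Q \<Longrightarrow> Kc c \<le> K" using c0 unfolding K_def by auto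
  define D1 where "D1 = max 1 (max (K+1) ((89 + (1+\<epsilon>)*K)/\<epsilon>))"
  have D1: "D1 \<ge> 1" "D1 \<ge> K+1" "D1 \<ge> (89 + (1+\<epsilon>)*K)/\<epsilon>" unfolding D1_def by auto
  define N where "N = nat \<lceil>Q^2 * (D1+2)^2 / (Q-1)\<rceil> + 3"
  show "\<exists>N. \<forall>n\<ge>N. \<forall>c::real.
     (let S1 = sqrt (real q ^ 2 + 4 * (real q - 1) * (real n - 2));
          S2 = sqrt (real q ^ 2 + 4 * (real q - 1) * (real n - 3));
          s = (S1 - real n * (real q - 2) + 2 * c + real q - 4) / (real n * real q)
      in n \<ge> 3 \<and> 0 \<le> c \<and> c < (real q - 1) * (1 - 2 / (S1 + S2)) \<and> s \<in> T_set n \<longrightarrow>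
         real (A_code q n s) \<le> (1 + \<epsilon>) * (real q * (real q - 1)^2 * (real n)^2 / (2 * (real q - c))))"
  proof (intro exI[of _ N] allI impI)
    fix n :: nat and c :: real
    assume nN: "N \<le> n"
    define S1 where "S1 = sqrt (Q ^ 2 + 4 * (Q - 1) * (real n - 2))"
    define S2 where "S2 = sqrt (Q ^ 2 + 4 * (Q - 1) * (real n - 3))"
    define s where "s = (S1 - real n * (Q - 2) + 2 * c + Q - 4) / (real n * Q)"
    have main: "n \<ge> 3 \<and> 0 \<le> c \<and> c < (Q - 1) * (1 - 2 / (S1 + S2)) \<and> s \<in> T_set n \<longrightarrow>
         real (A_code q n s) \<le> (1 + \<epsilon>) * (Q * (Q - 1)^2 * (real n)^2 / (2 * (Q - c)))"
    proof (intro impI)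
      assume H: "n \<ge> 3 \<and> 0 \<le> c \<and> c < (Q - 1) * (1 - 2 / (S1 + S2)) \<and> s \<in> T_set n"
      have n3: "real n \<ge> 3" and c0': "c \<ge> 0" and clt: "c < (Q - 1) * (1 - 2 / (S1 + S2))"
        using H by auto
      have Qp: "Q > 0" "Q - 1 > 0" using Q2 by auto
      have Q1: "Q > 1" using Q2 by simp
      have S1ge: "S1 \<ge> Q"
      proof -
        have "sqrt (Q^2) \<le> S1" unfolding S1_def using Q2 n3 by (intro real_sqrt_le_mono) auto
        then show ?thesis using Q2 by simp
      qed
      have S2ge: "S2 \<ge> 0"
      proof -
        have "0 \<le> 4 * (Q - 1) * (real n - 3)" using Q2 n3 by (intro mult_nonneg_nonneg) auto
        then have "0 \<le> Q ^ 2 + 4 * (Q - 1) * (real n - 3)" by simp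
        then show ?thesis unfolding S2_def by simp
      qed
      have cQ: "c \<le> Q - 1"
      proof -
        have "2 / (S1 + S2) \<ge> 0" using S1ge S2ge Q2 by simp
        then have "(Q - 1) * (1 - 2 / (S1 + S2)) \<le> (Q - 1) * 1"
          using Qp by (intro mult_left_mono) auto
        then show ?thesis using clt by simp
      qed
      have Qc: "Q - c \<ge> 1" using cQ by simp
      have Kc_c: "Kc c \<le> K" using Kc_le c0' cQ by simp
      have Gc: "G0 c \<le> K" "G1 c \<le> K" "G2 c \<le> K" "G3 c \<le> K"
        using Kc_c Gnn[of c] unfolding Kc_def by linarith+
      define D where "D = (S1 + 2*c + Q - 4) / (2*Q)"
      have S1sq: "S1^2 = Q^2 + 4 * (Q - 1) * (real n - 2)"
        unfolding S1_def using Q2 n3 by (intro real_sqrt_pow2) auto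
      have S1D: "2*Q*D - (2*c+Q-4) = S1" unfolding D_def using Qp by (simp add: field_simps)
      have nn: "4*real n*(Q-1) = (2*Q*D-(2*c+Q-4))^2 - Q^2 + 8*(Q-1)"
        unfolding S1D S1sq by (simp add: algebra_simps)
      define y where "y = sqrt ((Q-1) * real n)"
      have y2: "y^2 = (Q-1) * real n" unfolding y_def using Qp by (intro real_sqrt_pow2) auto
      have y0: "y \<ge> 0" unfolding y_def using Qp by simp
      have nbig: "Q^2 * (D1+2)^2 / (Q-1) \<le> real n"
      proof -
        have "Q^2 * (D1+2)^2 / (Q-1) \<le> real (nat \<lceil>Q^2 * (D1+2)^2 / (Q-1)\<rceil>)"
          by (rule real_nat_ceiling_ge)
        also have "\<dots> \<le> real N" unfolding N_def by simp
        also have "\<dots> \<le> real n" using nN by simp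
        finally show ?thesis .
      qed
      have yge: "y \<ge> Q * (D1+2)"
      proof -
        have "Q^2 * (D1+2)^2 \<le> real n * (Q-1)" using nbig Qp by (simp add: pos_divide_le_eq)
        then have "(Q * (D1+2))^2 \<le> (Q-1) * real n" by (simp add: power_mult_distrib mult.commute)
        then have "sqrt ((Q * (D1+2))^2) \<le> y" unfolding y_def by (rule real_sqrt_le_mono)
        then show ?thesis using Qp D1 by simp
      qed
      have y3Q: "y \<ge> 3 * Q"
      proof -
        have "Q * 3 \<le> Q * (D1+2)" using D1 Qp by (intro mult_left_mono) auto
        then show ?thesis using yge by linarith
      qed
      have S1y: "S1 \<ge> 2*y - 2*Q"
      proof -
        have "Q * (3*Q) \<le> Q * y" using y3Q Qp by (intro mult_left_mono) auto
        then have Qy: "Q * y \<ge> 3 * Q^2" by (simp add: power2_eq_square)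
        have QQ: "Q^2 \<ge> 2 * Q" using Q2 by (simp add: power2_eq_square)
        have "(2*y - 2*Q)^2 \<le> Q^2 + 4 * (Q - 1) * (real n - 2)"
        proof -
          have "(2*y - 2*Q)^2 = 4*y^2 - 8*(Q*y) + 4*Q^2" by (simp add: power2_eq_square algebra_simps)
          also have "\<dots> = 4*((Q-1)*real n) - 8*(Q*y) + 4*Q^2" using y2 by simp
          also have "\<dots> \<le> Q^2 + 4 * (Q - 1) * (real n - 2)" 
          proof -
            have e: "4 * (Q - 1) * (real n - 2) = 4 * ((Q - 1) * real n) - 8*Q + 8" by (simp add: algebra_simps)
            show ?thesis unfolding e using Qy QQ Q2 by linarith
          qed
          finally show ?thesis .
        qed
        then show ?thesis unfolding S1_def by (rule real_le_rsqrt)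
      qed
      have DyQ: "D \<ge> y / Q - 2"
      proof -
        have "D \<ge> (2*y - 2*Q + Q - 4) / (2*Q)" unfolding D_def using S1y c0' Qp
          by (intro divide_right_mono) auto
        moreover have "(2*y - 2*Q + Q - 4) / (2*Q) = y/Q - 1/2 - 2/Q" using Qp by (simp add: field_simps)
        moreover have "2/Q \<le> 1" using Q2 by simp
        ultimately show ?thesis by linarith
      qed
      have yQ: "y / Q \<ge> D1 + 2" using yge Qp by (simp add: field_simps)
      have DD1: "D \<ge> D1" using DyQ yQ by linarith
      have D1': "D \<ge> 1" "D \<ge> K + 1" "D \<ge> (89 + (1+\<epsilon>)*K)/\<epsilon>" using DD1 D1 by auto
      define X where "X = real n * (Q-1) / Q^2"
      have X0: "X \<ge> 0" unfolding X_def using Qp by simp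
      have XyQ: "X = (y/Q)^2" unfolding X_def using y2 Qp by (simp add: power_divide algebra_simps)
      have XD: "X \<le> (D+2)^2" unfolding XyQ using DyQ yQ y0 Qp
        by (intro power_mono) (auto simp: field_simps)
      have a14: "a14 Q c \<ge> 1" "a23 Q c \<ge> 1" "a32 Q c \<ge> 1"
      proof -
        have "Q^5 \<ge> 2^5" using Q2 by (intro power_mono) auto
        then have h: "Q^5 * (Q - 1) \<ge> 32 * 1" using Q2 by (intro mult_mono) auto
        show "a14 Q c \<ge> 1" "a23 Q c \<ge> 1" "a32 Q c \<ge> 1"
          unfolding a14_def a23_def a32_def using h by (simp_all add: algebra_simps pow5 pow6)
      qed
      have a04: "a04 Q c = 2 * Q^4 * (Q-1) * (Q-c)" unfolding a04_def
        by (simp add: algebra_simps pow5 pow6 power4_eq_xxxx)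
      have a04ge: "a04 Q c \<ge> 1"
      proof -
        have "Q^4 \<ge> 2^4" using Q2 by (intro power_mono) auto
        then have "Q^4 * (Q - 1) \<ge> 16 * 1" using Q2 by (intro mult_mono) auto
        then have "Q^4 * (Q - 1) * (Q - c) \<ge> 16 * 1" using Qc by (intro mult_mono) auto
        then show ?thesis unfolding a04 by simp
      qed
      have Dpos: "D > 0" using D1' by simp
      have DK: "D \<ge> K" using D1' by simp
      have QQ4: "Q^4 * (Q-1)^2 > 0" using Qp by simp
      have f1: "ff1 (real n) (1/Q) D \<ge> 0"
      proof -
        have l: "a13 Q c * D^3 + a12 Q c * D^2 + a11 Q c * D^1 + a10 Q c * D^0 \<ge> - K * D^3"
          by (rule low4[OF D1'(1) Gc(2)[unfolded G1_def]])
        have "1 * D^4 \<le> a14 Q c * D^4" using a14 Dpos by (intro mult_right_mono) auto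
        then have "a14 Q c * D^4 \<ge> 1 * (D * D^3)" by (simp add: eval_nat_numeral)
        moreover have "D * D^3 \<ge> K * D^3" using DK Dpos by (intro mult_right_mono) auto
        ultimately have "Q^4*(Q-1)^2 * ff1 (real n) (1/Q) D \<ge> 0"
          unfolding subst1[OF Q1 nn] using Qp l by linarith
        then show ?thesis using QQ4 by (simp add: zero_le_mult_iff)
      qed
      have f2: "ff2 (real n) (1/Q) D \<ge> 0"
      proof -
        have l: "a22 Q c * D^2 + a21 Q c * D^1 + a20 Q c * D^0 \<ge> - K * D^2"
          by (rule low3[OF D1'(1) Gc(3)[unfolded G2_def]])
        have "1 * D^3 \<le> a23 Q c * D^3" using a14 Dpos by (intro mult_right_mono) auto
        then have "a23 Q c * D^3 \<ge> 1 * (D * D^2)" by (simp add: eval_nat_numeral)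
        moreover have "D * D^2 \<ge> K * D^2" using DK Dpos by (intro mult_right_mono) auto
        ultimately have "Q^4*(Q-1)^2 * (2 * ff2 (real n) (1/Q) D) \<ge> 0"
          unfolding subst2[OF Q1 nn] using Qp l by linarith
        then show ?thesis using QQ4 by (simp add: zero_le_mult_iff)
      qed
      have f3: "ff3 (real n) (1/Q) D \<ge> 0"
      proof -
        have l: "a31 Q c * D^1 + a30 Q c * D^0 \<ge> - K * D"
          by (rule low2[OF D1'(1) Gc(4)[unfolded G3_def]])
        have "1 * D^2 \<le> a32 Q c * D^2" using a14 Dpos by (intro mult_right_mono) auto
        then have "a32 Q c * D^2 \<ge> 1 * (D * D)" by (simp add: eval_nat_numeral)
        moreover have "D * D \<ge> K * D" using DK Dpos by (intro mult_right_mono) auto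
        ultimately have "Q^4*(Q-1)^2 * (6 * ff3 (real n) (1/Q) D) \<ge> 0"
          unfolding subst3[OF Q1 nn] using Qp l by linarith
        then show ?thesis using QQ4 by (simp add: zero_le_mult_iff)
      qed
      define B where "B = D^4 - K * D^3"
      have Bpos: "B > 0"
      proof -
        have "D * D^3 > K * D^3" using DK D1' Dpos by (intro mult_strict_right_mono) auto
        then show ?thesis unfolding B_def by (simp add: power4_eq_xxxx power3_eq_cube)
      qed
      have f0: "Q^4*(Q-1)^2 * ff0 (real n) (1/Q) D \<ge> a04 Q c * B"
      proof -
        have l: "a03 Q c * D^3 + a02 Q c * D^2 + a01 Q c * D^1 + a00 Q c * D^0 \<ge> - K * D^3"
          by (rule low4[OF D1'(1) Gc(1)[unfolded G0_def]])
        have "(a04 Q c - 1) * (K * D^3) \<ge> 0" using a04ge K0 Dpos by simp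
        moreover have "(a04 Q c - 1) * (K * D^3) = a04 Q c * (K * D^3) - K * D^3" by (simp add: algebra_simps)
        moreover have "a04 Q c * (D^4 - K*D^3) = a04 Q c * D^4 - a04 Q c * (K * D^3)" by (simp add: algebra_simps)
        have g: "a04 Q c * (D^4 - K*D^3) \<le> a04 Q c * D^4 + (a03 Q c * D^3 + a02 Q c * D^2 + a01 Q c * D^1 + a00 Q c * D^0)"
        proof (rule lin_aux)
          show "0 \<le> (a04 Q c - 1) * (K * D^3)" using a04ge K0 Dpos by simp
          show "- (K * D^3) \<le> a03 Q c * D^3 + a02 Q c * D^2 + a01 Q c * D^1 + a00 Q c * D^0"
            using l by simp
        qed
        have "Q^4*(Q-1)^2 * ff0 (real n) (1/Q) D = a04 Q c * D^4 + (a03 Q c * D^3 + a02 Q c * D^2 + a01 Q c * D^1 + a00 Q c * D^0)"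
          using subst0[OF Q1 nn] by (simp only: add.assoc)
        then show ?thesis using g unfolding B_def by simp
      qed
      have f0': "ff0 (real n) (1/Q) D \<ge> 2 * (Q - c) * B / (Q - 1)"
      proof -
        have nz: "Q^4*(Q-1) \<noteq> 0" using Qp by simp
        have "a04 Q c * B / (Q^4*(Q-1)^2) = ((2 * (Q - c) * B) * (Q^4*(Q-1))) / ((Q - 1) * (Q^4*(Q-1)))"
          unfolding a04 by (simp add: power2_eq_square mult_ac)
        also have "\<dots> = 2 * (Q - c) * B / (Q - 1)" using nz by (rule nonzero_mult_divide_mult_cancel_right)
        finally have "2 * (Q - c) * B / (Q - 1) = a04 Q c * B / (Q^4*(Q-1)^2)" by simp
        also have "\<dots> \<le> ff0 (real n) (1/Q) D" using f0 QQ4 by (simp add: divide_le_eq mult.commute)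
        finally show ?thesis .
      qed
      have npos: "real n > 0" using n3 by simp
      have sD: "real n * (1 + s) / 2 - real n / Q = D"
        unfolding s_def D_def using npos Qp by (simp add: field_simps)
      define T where "T = real n - real n / Q"
      have T0: "T \<ge> 0" unfolding T_def using Q2 npos by (simp add: field_simps)
      have finalineq: "real n * T^2 * (T + D) \<le> Q * (Q-1) * (real n)^2 * ((1+\<epsilon>) * B)"
      proof -
        have id: "real n * T^2 * (T + D) = Q * (Q-1) * (real n)^2 * (X^2 + X * D / Q)"
          unfolding T_def X_def using Qp by (simp add: field_simps power2_eq_square power3_eq_cube power4_eq_xxxx)
        have "X^2 \<le> ((D+2)^2)^2" using XD X0 by (intro power_mono) auto
        moreover have "X * D / Q \<le> (D+2)^2 * D"
        proof -
          have xd: "0 \<le> X * D" using X0 Dpos by simp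
          have "X * D * 1 \<le> X * D * Q" using xd Q2 by (intro mult_left_mono) auto
          then have "X * D / Q \<le> X * D" using Qp by (simp add: divide_le_eq)
          also have "\<dots> \<le> (D+2)^2 * D" using XD Dpos by (intro mult_right_mono) auto
          finally show ?thesis .
        qed
        ultimately have "X^2 + X * D / Q \<le> (D+2)^4 + (D+2)^2 * D" by (simp add: power_mult[symmetric])
        also have "\<dots> \<le> (1+\<epsilon>) * B" unfolding B_def using asym_ineq[OF eps K0 D1'(1) D1'(3)] .
        finally have "X^2 + X * D / Q \<le> (1+\<epsilon>) * B" .
        then show ?thesis unfolding id using Qp by (intro mult_left_mono) auto
      qed
      define Cs where "Cs = {card C | C. C \<subseteq> hamming_space q n \<and> (\<forall>x\<in>C. \<forall>y\<in>C. x \<noteq> y \<longrightarrow>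
          1 - 2 * real (hamming_dist x y) / real n \<le> s)}"
      have fin: "finite Cs"
      proof -
        have "Cs \<subseteq> card ` Pow (hamming_space q n)" unfolding Cs_def by auto
        then show ?thesis using finite_hamming by (meson finite_Pow_iff finite_imageI finite_subset)
      qed
      have ne: "Cs \<noteq> {}" unfolding Cs_def by auto
      have "Max Cs \<in> Cs" using fin ne by (rule Max_in)
      then obtain C where C: "C \<subseteq> hamming_space q n"
        and cond: "\<forall>x\<in>C. \<forall>y\<in>C. x \<noteq> y \<longrightarrow> 1 - 2 * real (hamming_dist x y) / real n \<le> s"
        and MC: "Max Cs = card C" unfolding Cs_def by auto
      have far: "real (mc n x y) - real n / real q \<le> D" if "x \<in> C" "y \<in> C" "x \<noteq> y" for x y
      proof -
        have "1 - 2 * real (hamming_dist x y) / real n \<le> s" using cond that by auto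
        moreover have "real (hamming_dist x y) = real n - real (mc n x y)"
          using hd_mc[of x q n y] C that by auto
        ultimately have "1 - 2 * (real n - real (mc n x y)) / real n \<le> s" by simp
        then have "real n - 2 * (real n - real (mc n x y)) \<le> s * real n"
          using npos by (simp add: field_simps)
        then have "real (mc n x y) \<le> real n * (1 + s) / 2" by (simp add: algebra_simps)
        then show ?thesis using sD unfolding Q_def by linarith
      qed
      have lp: "real (card C) * real (card C) * ff0 (real n) (1/real q) D \<le>
         real (card C) * ((real n - real n / real q + real n * (1/real q)) * (real n - real n / real q - D)
          * (real n - real n / real q + D)^2)"
        using lp_bound[OF assms C far] f1 f2 f3 unfolding Q_def by auto
      have Fv: "(real n - real n / Q + real n * (1/Q)) * (real n - real n / Q - D) * (real n - real n / Q + D)^2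
          \<le> real n * T^2 * (T + D)"
      proof -
        have "(T - D) * (T + D)^2 = (T^2 - D^2) * (T + D)" by (simp add: power2_eq_square algebra_simps)
        also have "\<dots> \<le> T^2 * (T + D)" using T0 Dpos by (intro mult_right_mono) auto
        finally have "(T - D) * (T + D)^2 \<le> T^2 * (T + D)" .
        then have "real n * ((T - D) * (T + D)^2) \<le> real n * (T^2 * (T + D))" using npos
          by (intro mult_left_mono) auto
        then show ?thesis unfolding T_def by (simp add: algebra_simps)
      qed
      have RHS0: "(1 + \<epsilon>) * (Q * (Q - 1)^2 * (real n)^2 / (2 * (Q - c))) \<ge> 0"
        using eps Qp Qc by simp
      have "real (card C) \<le> (1 + \<epsilon>) * (Q * (Q - 1)^2 * (real n)^2 / (2 * (Q - c)))"
      proof (cases "card C = 0")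
        case True
        then show ?thesis using RHS0 by simp
      next
        case False
        then have cp: "real (card C) > 0" by simp
        have "real (card C) * ff0 (real n) (1/Q) D \<le> real n * T^2 * (T + D)"
          using lp Fv cp unfolding Q_def by (simp add: mult.assoc mult_le_cancel_left_pos)
        then have "real (card C) * (2 * (Q - c) * B / (Q - 1)) \<le> Q * (Q-1) * (real n)^2 * ((1+\<epsilon>) * B)"
          using f0' cp finalineq by (smt (verit) mult_left_mono)
        then have "real (card C) * (2 * (Q - c)) * B \<le> (Q * (Q-1)^2 * (real n)^2 * (1+\<epsilon>)) * B"
          using Qp by (simp add: field_simps power2_eq_square)
        then have "real (card C) * (2 * (Q - c)) \<le> Q * (Q-1)^2 * (real n)^2 * (1+\<epsilon>)"
          using Bpos by simp
        then show ?thesis using Qc by (simp add: field_simps)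
      qed
      moreover have "A_code q n s = card C" unfolding A_code_def Cs_def[symmetric] MC ..
      ultimately show "real (A_code q n s) \<le> (1 + \<epsilon>) * (Q * (Q - 1)^2 * (real n)^2 / (2 * (Q - c)))"
        by simp
    qed
    then show "let S1 = sqrt (real q ^ 2 + 4 * (real q - 1) * (real n - 2));
          S2 = sqrt (real q ^ 2 + 4 * (real q - 1) * (real n - 3));
          s = (S1 - real n * (real q - 2) + 2 * c + real q - 4) / (real n * real q)
      in n \<ge> 3 \<and> 0 \<le> c \<and> c < (real q - 1) * (1 - 2 / (S1 + S2)) \<and> s \<in> T_set n \<longrightarrow>
         real (A_code q n s) \<le> (1 + \<epsilon>) * (real q * (real q - 1)^2 * (real n)^2 / (2 * (real q - c)))"
      unfolding Let_def S1_def S2_def s_def Q_def .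
  qed
qed

end
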